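(* Let $G=(V,E)$ be a finite directed graph with $k$ players; player $i$ has a source–sink pair $(s_i,t_i)$ and flow amount $r_i>0$, and routes all of $r_i$ along a single path $P_i$ in the set $\Pi_i$ of $s_i$–$t_i$ paths. For a feasible flow $f$ (a choice of $P_i\in\Pi_i$ for each $i$), let $f_e=\sum_{i:e\in P_i} r_i$. Each edge $e$ has an affine congestion function $c_e(x)=a_e x+b_e$ with $c_e:\mathbb{R}^+\to\mathbb{R}^+$, and a unit-price function $u_e:\mathbb{R}^+\to\mathbb{R}^+$; the cost to player $i$ of path $P$ is $t^i_P(f)=\sum_{e\in P}\bigl(c_e(f_e)+u_e(r_i)\bigr)$. The social cost of $f$ is $$SC(f)=\sum_{e\in E} c_e(f_e)f_e+\sum_{i=1}^k\sum_{e\in P_i}u_e(r_i)\,r_i .$$ A flow $f$ is an equilibrium flow if no player $i$ can obtain $t^i_{\tilde P}(\tilde f)<t^i_{P_i}(f)$ by switching to another path $\tilde P\in\Pi_i$, where $\tilde f$ is $f$ with player $i$'s path replaced by $\tilde P$. Let $f^*$ be a feasible flow minimizing $SC$. Then for every equilibrium flow $f$, $$\frac{SC(f)}{SC(f^* )}\le\frac{3+\sqrt5}{2},$$ i.e. the price of anarchy is at most $\frac{3+\sqrt5}{2}\approx 2.618$.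
   Context: The price of anarchy is the ratio of the social cost of the worst equilibrium flow to the social cost of an optimal (social-cost-minimizing) feasible flow. *)

theory Defs
  imports Complex_Main
begin

fun walk :: "('e \<Rightarrow> 'v) \<Rightarrow> ('e \<Rightarrow> 'v) \<Rightarrow> 'v \<Rightarrow> 'v \<Rightarrow> 'e list \<Rightarrow> bool" where
  "walk tail head s t [] = (s = t)"
| "walk tail head s t (e # es) = (tail e = s \<and> walk tail head (head e) t es)"

definition st_path :: "'e set \<Rightarrow> ('e \<Rightarrow> 'v) \<Rightarrow> ('e \<Rightarrow> 'v) \<Rightarrow> 'v \<Rightarrow> 'v \<Rightarrow> 'e list \<Rightarrow> bool" where
  "st_path E tail head s t P \<longleftrightarrow> set P \<subseteq> E \<and> walk tail head s t P \<and> distinct (s # map head P)"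

definition feasible :: "'e set \<Rightarrow> ('e \<Rightarrow> 'v) \<Rightarrow> ('e \<Rightarrow> 'v) \<Rightarrow> nat \<Rightarrow> (nat \<Rightarrow> 'v) \<Rightarrow> (nat \<Rightarrow> 'v)
    \<Rightarrow> (nat \<Rightarrow> 'e list) \<Rightarrow> bool" where
  "feasible E tail head k s t P \<longleftrightarrow> (\<forall>i<k. st_path E tail head (s i) (t i) (P i))"

definition load :: "nat \<Rightarrow> (nat \<Rightarrow> real) \<Rightarrow> (nat \<Rightarrow> 'e list) \<Rightarrow> 'e \<Rightarrow> real" where
  "load k r P e = (\<Sum>i\<in>{i. i < k \<and> e \<in> set (P i)}. r i)"

definition player_cost :: "nat \<Rightarrow> (nat \<Rightarrow> real) \<Rightarrow> ('e \<Rightarrow> real) \<Rightarrow> ('e \<Rightarrow> real)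
    \<Rightarrow> ('e \<Rightarrow> real \<Rightarrow> real) \<Rightarrow> nat \<Rightarrow> 'e list \<Rightarrow> (nat \<Rightarrow> 'e list) \<Rightarrow> real" where
  "player_cost k r a b u i Q P =
     (\<Sum>e\<in>set Q. (a e * load k r P e + b e) + u e (r i))"

definition social_cost :: "'e set \<Rightarrow> nat \<Rightarrow> (nat \<Rightarrow> real) \<Rightarrow> ('e \<Rightarrow> real) \<Rightarrow> ('e \<Rightarrow> real)
    \<Rightarrow> ('e \<Rightarrow> real \<Rightarrow> real) \<Rightarrow> (nat \<Rightarrow> 'e list) \<Rightarrow> real" where
  "social_cost E k r a b u P =
     (\<Sum>e\<in>E. (a e * load k r P e + b e) * load k r P e)
     + (\<Sum>i<k. \<Sum>e\<in>set (P i). u e (r i) * r i)"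

definition equilibrium :: "'e set \<Rightarrow> ('e \<Rightarrow> 'v) \<Rightarrow> ('e \<Rightarrow> 'v) \<Rightarrow> nat \<Rightarrow> (nat \<Rightarrow> 'v) \<Rightarrow> (nat \<Rightarrow> 'v)
    \<Rightarrow> (nat \<Rightarrow> real) \<Rightarrow> ('e \<Rightarrow> real) \<Rightarrow> ('e \<Rightarrow> real) \<Rightarrow> ('e \<Rightarrow> real \<Rightarrow> real)
    \<Rightarrow> (nat \<Rightarrow> 'e list) \<Rightarrow> bool" where
  "equilibrium E tail head k s t r a b u P \<longleftrightarrow>
     feasible E tail head k s t P \<and>
     (\<forall>i<k. \<forall>Q. st_path E tail head (s i) (t i) Q \<longrightarrow>
        \<not> (player_cost k r a b u i Q (P(i := Q)) < player_cost k r a b u i (P i) P))"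

end

theory Submission
  imports Defs
begin

lemma exch:
  fixes w :: "nat \<Rightarrow> real" and h :: "'e \<Rightarrow> real"
  assumes "finite E" "\<forall>i<k. set (P i) \<subseteq> E"
  shows "(\<Sum>i<k. \<Sum>e\<in>set (P i). w i * h e) = (\<Sum>e\<in>E. h e * (\<Sum>i\<in>{i. i<k \<and> e\<in>set (P i)}. w i))"
proof -
  have "(\<Sum>i<k. \<Sum>e\<in>set (P i). w i * h e) = (\<Sum>i<k. \<Sum>e\<in>E. if e\<in>set (P i) then w i * h e else 0)"
  proof (rule sum.cong[OF refl])
    fix i assume "i \<in> {..<k}"
    then have "set (P i) = {e\<in>E. e \<in> set (P i)}" using assms(2) by auto
    then show "(\<Sum>e\<in>set (P i). w i * h e) = (\<Sum>e\<in>E. if e\<in>set (P i) then w i * h e else 0)"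
      using sum.inter_filter[OF assms(1), of "\<lambda>e. w i * h e" "\<lambda>e. e \<in> set (P i)"] by simp
  qed
  also have "\<dots> = (\<Sum>e\<in>E. \<Sum>i<k. if e\<in>set (P i) then w i * h e else 0)"
    by (rule sum.swap)
  also have "\<dots> = (\<Sum>e\<in>E. h e * (\<Sum>i\<in>{i. i<k \<and> e\<in>set (P i)}. w i))"
  proof (rule sum.cong[OF refl])
    fix e
    have "{i. i<k \<and> e\<in>set (P i)} = {i\<in>{..<k}. e\<in>set (P i)}" by auto
    then show "(\<Sum>i<k. if e\<in>set (P i) then w i * h e else 0) = h e * (\<Sum>i\<in>{i. i<k \<and> e\<in>set (P i)}. w i)"
      using sum.inter_filter[of "{..<k}" "\<lambda>i. w i * h e" "\<lambda>i. e \<in> set (P i)"]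
      by (simp add: sum_distrib_left mult.commute)
  qed
  finally show ?thesis .
qed

lemma dev_load:
  assumes "i < k" "\<forall>j<k. r j \<ge> 0"
  shows "load k r (P(i:=Q)) e \<le> load k r P e + r i"
proof -
  let ?A = "{j. j<k \<and> e \<in> set ((P(i:=Q)) j)}"
  let ?B = "{j. j<k \<and> e \<in> set (P j)}"
  have fin: "finite (insert i ?B)" by simp
  have "?A \<subseteq> insert i ?B" by auto
  then have "sum r ?A \<le> sum r (insert i ?B)"
    by (rule sum_mono2[OF fin]) (use assms in auto)
  also have "\<dots> \<le> r i + sum r ?B"
    using assms by (cases "i \<in> ?B") (auto simp: sum.insert_if)
  finally show ?thesis unfolding load_def by simp
qed

lemma sq_le:
  fixes r :: "nat \<Rightarrow> real"
  assumes "finite S" "\<forall>i\<in>S. r i \<ge> 0"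
  shows "(\<Sum>i\<in>S. r i * r i) \<le> sum r S * sum r S"
proof -
  have "(\<Sum>i\<in>S. r i * r i) \<le> (\<Sum>i\<in>S. r i * sum r S)"
  proof (rule sum_mono)
    fix i assume i: "i \<in> S"
    have "r i \<le> sum r S" using assms i by (intro member_le_sum) auto
    then show "r i * r i \<le> r i * sum r S" using assms i by (simp add: mult_left_mono)
  qed
  also have "\<dots> = sum r S * sum r S" by (simp add: sum_distrib_right)
  finally show ?thesis .
qed

lemma pointwise:
  fixes a b f g :: real
  assumes "a \<ge> 0" "b \<ge> 0" "f \<ge> 0" "g \<ge> 0"
  shows "a*f*g + a*g*g + b*g \<le> (sqrt 5 - 1)/4 * (a*f*f) + (5 + sqrt 5)/4 * (a*g*g + b*g)"
proof -
  define q where "q = sqrt 5"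
  have q2: "q*q = 5" unfolding q_def by simp
  have qp: "q \<ge> 1" unfolding q_def by (simp add: real_le_rsqrt)
  have id: "4*((q-1)*f*f - 4*f*g + (q+1)*g*g) = (q-1)*(2*f-(q+1)*g)*(2*f-(q+1)*g)"
  proof -
    have "(q-1)*(2*f-(q+1)*g)*(2*f-(q+1)*g) = 4*(q-1)*f*f - 4*(q*q-1)*f*g + (q*q-1)*(q+1)*g*g"
      by (simp add: algebra_simps)
    also have "\<dots> = 4*((q-1)*f*f - 4*f*g + (q+1)*g*g)" by (simp add: q2 algebra_simps)
    finally show ?thesis by simp
  qed
  have "0 \<le> (q-1)*(2*f-(q+1)*g)*(2*f-(q+1)*g)"
    using qp by (metis diff_ge_0_iff_ge mult.assoc mult_nonneg_nonneg zero_le_square)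
  then have "0 \<le> 4*((q-1)*f*f - 4*f*g + (q+1)*g*g)" by (subst id)
  then have "0 \<le> (q-1)*f*f - 4*f*g + (q+1)*g*g" by simp
  then have "0 \<le> a*((q-1)*f*f - 4*f*g + (q+1)*g*g)" using assms by simp
  moreover have "0 \<le> (1+q)*b*g" using assms qp by simp
  ultimately have "4*(a*f*g + a*g*g + b*g) \<le> (q-1)*(a*f*f) + (5+q)*(a*g*g + b*g)"
    by (simp add: algebra_simps)
  then show ?thesis unfolding q_def[symmetric] by simp
qed


theorem mainTheorem3:
  fixes V :: "'v set" and E :: "'e set" and tail head :: "'e \<Rightarrow> 'v"
    and k :: nat and s t :: "nat \<Rightarrow> 'v" and r :: "nat \<Rightarrow> real"
    and a b :: "'e \<Rightarrow> real" and u :: "'e \<Rightarrow> real \<Rightarrow> real"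
    and Pstar P :: "nat \<Rightarrow> 'e list"
  assumes "finite V" and "finite E"
    and "\<forall>e\<in>E. tail e \<in> V \<and> head e \<in> V"
    and "\<forall>i<k. s i \<in> V \<and> t i \<in> V"
    and "\<forall>i<k. r i > 0"
    and "\<forall>e\<in>E. \<forall>x\<ge>0. a e * x + b e \<ge> 0"
    and "\<forall>e\<in>E. \<forall>x\<ge>0. u e x \<ge> 0"
    and "feasible E tail head k s t Pstar"
    and "\<forall>Q. feasible E tail head k s t Q \<longrightarrow> social_cost E k r a b u Pstar \<le> social_cost E k r a b u Q"
    and "equilibrium E tail head k s t r a b u P"
  shows "social_cost E k r a b u P \<le> (3 + sqrt 5) / 2 * social_cost E k r a b u Pstar"
proof -
  note finE = assms(2)
  have r0: "\<forall>j<k. r j \<ge> 0" using assms(5) by (simp add: less_imp_le)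
  have b0: "\<And>e. e \<in> E \<Longrightarrow> b e \<ge> 0" using assms(6) by force
  have a0: "\<And>e. e \<in> E \<Longrightarrow> a e \<ge> 0"
  proof (rule ccontr)
    fix e assume e: "e \<in> E" and n: "\<not> a e \<ge> 0"
    define x where "x = (\<bar>b e\<bar> + 1) / (- a e)"
    have "x \<ge> 0" using n unfolding x_def by (intro divide_nonneg_pos) auto
    then have "a e * x + b e \<ge> 0" using assms(6) e by blast
    moreover have "a e * x = - (\<bar>b e\<bar> + 1)" using n unfolding x_def by simp
    ultimately show False by linarith
  qed
  have stP: "\<forall>i<k. st_path E tail head (s i) (t i) (P i)"
    using assms(10) unfolding equilibrium_def feasible_def by blast
  have stS: "\<forall>i<k. st_path E tail head (s i) (t i) (Pstar i)"
    using assms(8) unfolding feasible_def by blast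
  have subP: "\<forall>i<k. set (P i) \<subseteq> E" using stP unfolding st_path_def by blast
  have subS: "\<forall>i<k. set (Pstar i) \<subseteq> E" using stS unfolding st_path_def by blast
  define f where "f = load k r P"
  define g where "g = load k r Pstar"
  have f0: "\<And>e. f e \<ge> 0" unfolding f_def load_def using r0 by (intro sum_nonneg) auto
  have g0: "\<And>e. g e \<ge> 0" unfolding g_def load_def using r0 by (intro sum_nonneg) auto
  define UP where "UP = (\<Sum>i<k. \<Sum>e\<in>set (P i). u e (r i) * r i)"
  define US where "US = (\<Sum>i<k. \<Sum>e\<in>set (Pstar i). u e (r i) * r i)"
  have SCP: "social_cost E k r a b u P = (\<Sum>e\<in>E. (a e * f e + b e) * f e) + UP"
    unfolding social_cost_def f_def UP_def by simp
  have SCS: "social_cost E k r a b u Pstar = (\<Sum>e\<in>E. (a e * g e + b e) * g e) + US"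
    unfolding social_cost_def g_def US_def by simp
  have US0: "US \<ge> 0" unfolding US_def
    using subS r0 assms(7) by (intro sum_nonneg mult_nonneg_nonneg) (auto, blast)
  have UP0: "UP \<ge> 0" unfolding UP_def
    using subP r0 assms(7) by (intro sum_nonneg mult_nonneg_nonneg) (auto, blast)
  have player: "r i * (\<Sum>e\<in>set (P i). (a e * f e + b e) + u e (r i))
      \<le> r i * (\<Sum>e\<in>set (Pstar i). (a e * f e + b e) + a e * r i + u e (r i))" if i: "i < k" for i
  proof -
    have "\<not> player_cost k r a b u i (Pstar i) (P(i := Pstar i)) < player_cost k r a b u i (P i) P"
      using assms(10) stS i unfolding equilibrium_def by blast
    then have "(\<Sum>e\<in>set (P i). (a e * f e + b e) + u e (r i))
        \<le> player_cost k r a b u i (Pstar i) (P(i := Pstar i))"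
      unfolding player_cost_def f_def by simp
    also have "\<dots> \<le> (\<Sum>e\<in>set (Pstar i). (a e * f e + b e) + a e * r i + u e (r i))"
      unfolding player_cost_def
    proof (rule sum_mono)
      fix e assume e: "e \<in> set (Pstar i)"
      then have "e \<in> E" using subS i by blast
      then have "a e * load k r (P(i := Pstar i)) e \<le> a e * (f e + r i)"
        unfolding f_def by (intro mult_left_mono dev_load[OF i r0] a0)
      then show "a e * load k r (P(i := Pstar i)) e + b e + u e (r i)
          \<le> a e * f e + b e + a e * r i + u e (r i)" by (simp add: algebra_simps)
    qed
    finally show ?thesis using r0 i by (simp add: mult_left_mono)
  qed
  have L: "(\<Sum>i<k. r i * (\<Sum>e\<in>set (P i). (a e * f e + b e) + u e (r i)))
     = (\<Sum>i<k. \<Sum>e\<in>set (P i). r i * (a e * f e + b e)) + UP"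
    unfolding UP_def by (simp add: sum_distrib_left sum.distrib algebra_simps)
  have R: "(\<Sum>i<k. r i * (\<Sum>e\<in>set (Pstar i). (a e * f e + b e) + a e * r i + u e (r i)))
     = (\<Sum>i<k. \<Sum>e\<in>set (Pstar i). r i * (a e * f e + b e))
       + (\<Sum>i<k. \<Sum>e\<in>set (Pstar i). (r i * r i) * a e) + US"
    unfolding US_def by (simp add: sum_distrib_left sum.distrib algebra_simps)
  have L1: "(\<Sum>i<k. \<Sum>e\<in>set (P i). r i * (a e * f e + b e)) = (\<Sum>e\<in>E. (a e * f e + b e) * f e)"
    using exch[OF finE subP, of r "\<lambda>e. a e * f e + b e"] unfolding f_def load_def by simp
  have R1: "(\<Sum>i<k. \<Sum>e\<in>set (Pstar i). r i * (a e * f e + b e)) = (\<Sum>e\<in>E. (a e * f e + b e) * g e)"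
    using exch[OF finE subS, of r "\<lambda>e. a e * f e + b e"] unfolding g_def load_def by simp
  have R2: "(\<Sum>i<k. \<Sum>e\<in>set (Pstar i). (r i * r i) * a e) \<le> (\<Sum>e\<in>E. a e * g e * g e)"
  proof -
    have "(\<Sum>i<k. \<Sum>e\<in>set (Pstar i). (r i * r i) * a e)
       = (\<Sum>e\<in>E. a e * (\<Sum>i\<in>{i. i<k \<and> e\<in>set (Pstar i)}. r i * r i))"
      by (rule exch[OF finE subS])
    also have "\<dots> \<le> (\<Sum>e\<in>E. a e * g e * g e)"
    proof (rule sum_mono)
      fix e assume e: "e \<in> E"
      have "(\<Sum>i\<in>{i. i<k \<and> e\<in>set (Pstar i)}. r i * r i) \<le> g e * g e"
        unfolding g_def load_def using r0 by (intro sq_le) auto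
      then show "a e * (\<Sum>i\<in>{i. i<k \<and> e\<in>set (Pstar i)}. r i * r i) \<le> a e * g e * g e"
        using a0[OF e] by (simp add: mult_left_mono mult.assoc)
    qed
    finally show ?thesis .
  qed
  have main: "(\<Sum>e\<in>E. (a e * f e + b e) * f e) + UP
      \<le> (\<Sum>e\<in>E. (a e * f e + b e) * g e) + (\<Sum>e\<in>E. a e * g e * g e) + US"
  proof -
    have "(\<Sum>i<k. r i * (\<Sum>e\<in>set (P i). (a e * f e + b e) + u e (r i)))
      \<le> (\<Sum>i<k. r i * (\<Sum>e\<in>set (Pstar i). (a e * f e + b e) + a e * r i + u e (r i)))"
      using player by (intro sum_mono) auto
    then show ?thesis using L R L1 R1 R2 by linarith
  qed
  define q where "q = sqrt 5"
  have q1: "q \<ge> 1" unfolding q_def by (simp add: real_le_rsqrt)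
  define A where "A = (\<Sum>e\<in>E. a e * f e * f e)"
  define SCg where "SCg = (\<Sum>e\<in>E. (a e * g e + b e) * g e)"
  have pw: "(\<Sum>e\<in>E. (a e * f e + b e) * g e) + (\<Sum>e\<in>E. a e * g e * g e)
      \<le> (q - 1)/4 * A + (5 + q)/4 * SCg"
  proof -
    have "(\<Sum>e\<in>E. (a e * f e + b e) * g e) + (\<Sum>e\<in>E. a e * g e * g e)
        = (\<Sum>e\<in>E. a e*f e*g e + a e*g e*g e + b e*g e)"
      by (simp add: sum.distrib[symmetric] algebra_simps)
    also have "\<dots> \<le> (\<Sum>e\<in>E. (q - 1)/4 * (a e*f e*f e) + (5 + q)/4 * (a e*g e*g e + b e*g e))"
      using pointwise a0 b0 f0 g0 unfolding q_def by (intro sum_mono) auto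
    also have "\<dots> = (q - 1)/4 * A + (5 + q)/4 * (\<Sum>e\<in>E. a e*g e*g e + b e*g e)"
      unfolding A_def by (simp only: sum.distrib sum_distrib_left[symmetric])
    also have "(\<Sum>e\<in>E. a e*g e*g e + b e*g e) = SCg"
      unfolding SCg_def by (rule sum.cong) (simp_all add: algebra_simps)
    finally show ?thesis .
  qed
  have AP: "A \<le> social_cost E k r a b u P"
  proof -
    have "A \<le> (\<Sum>e\<in>E. (a e * f e + b e) * f e)"
      unfolding A_def using b0 f0
      by (intro sum_mono) (simp add: algebra_simps)
    then show ?thesis using SCP UP0 by linarith
  qed
  have "social_cost E k r a b u P \<le> (q - 1)/4 * social_cost E k r a b u P
       + (5 + q)/4 * social_cost E k r a b u Pstar"
  proof -
    have "(q-1)/4 * A \<le> (q - 1)/4 * social_cost E k r a b u P"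
      using AP q1 by (intro mult_left_mono) auto
    moreover have "US \<le> (5 + q)/4 * US" using US0 q1 by (simp add: algebra_simps)
    moreover have "(5 + q)/4 * social_cost E k r a b u Pstar = (5 + q)/4 * SCg + (5 + q)/4 * US"
      unfolding SCS SCg_def by (simp add: algebra_simps)
    ultimately show ?thesis using main pw SCP by linarith
  qed
  moreover have "(5 - q)/4 * social_cost E k r a b u P = social_cost E k r a b u P - (q - 1)/4 * social_cost E k r a b u P"
    by (simp add: field_simps)
  ultimately have "(5 - q)/4 * social_cost E k r a b u P \<le> (5 + q)/4 * social_cost E k r a b u Pstar"
    by linarith
  then have "(5 - q) * social_cost E k r a b u P \<le> (5 + q) * social_cost E k r a b u Pstar"
    by simp
  then have "(5 + q) * ((5 - q) * social_cost E k r a b u P) \<le> (5 + q) * ((5 + q) * social_cost E k r a b u Pstar)"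
    using q1 by (intro mult_left_mono) auto
  moreover have "(5 + q) * (5 - q) = 20" unfolding q_def by (simp add: algebra_simps)
  moreover have "(5 + q) * (5 + q) = 30 + 10 * q" unfolding q_def by (simp add: algebra_simps)
  ultimately have "20 * social_cost E k r a b u P \<le> (30 + 10 * q) * social_cost E k r a b u Pstar"
    by (simp add: mult.assoc[symmetric])
  then show ?thesis unfolding q_def by (simp add: field_simps)
qed

end
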